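(* Let $m,n,r$ be positive integers with $n\ge 2$, and let $p$ be a prime with $p>n+1$ and $p\nmid m$. Then \[ S_n^{(m)}(p^{r+1})\equiv (-1)^{m-1}\binom{n-2}{m-1}\,S_n^{(1)}(p^2)\,p^{r-1}\pmod{p^{r+1}}. \]
   Context: For a prime $p$, $\mathcal P_p$ denotes the set of positive integers not divisible by $p$. For positive integers $m,n,r$ with $p\nmid m$, $S_n^{(m)}(p^r):=\sum\frac{1}{l_1\cdots l_n}$, the sum over all $(l_1,\dots,l_n)\in\mathcal P_p^n$ with $l_1,\dots,l_n<p^r$ and $l_1+\dots+l_n=mp^r$. Congruences are between rational numbers whose denominators are prime to $p$: $x\equiv y\pmod{p^k}$ means $x-y\in p^k\mathbb Z_{(p)}$. Binomial coefficients $\binom{n-2}{m-1}$ are $0$ when $m-1>n-2$. *)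

theory Defs
  imports Complex_Main "HOL-Library.FuncSet" "HOL-Computational_Algebra.Primes"
begin

text \<open>The n-tuples (l_1,...,l_n) are represented as functions on the index set {0..<n}
(extensional, via PiE).\<close>

definition S_tuples :: "nat \<Rightarrow> nat \<Rightarrow> nat \<Rightarrow> nat \<Rightarrow> (nat \<Rightarrow> nat) set" where
  "S_tuples p n m r =
     {l \<in> {0..<n} \<rightarrow>\<^sub>E {k. 0 < k \<and> k < p ^ r \<and> \<not> p dvd k}.
        (\<Sum>i<n. l i) = m * p ^ r}"

definition S :: "nat \<Rightarrow> nat \<Rightarrow> nat \<Rightarrow> nat \<Rightarrow> rat" where
  "S p n m r = (\<Sum>l\<in>S_tuples p n m r. 1 / (\<Prod>i<n. of_nat (l i)))"

text \<open>Congruence modulo p^k in Z_(p): x - y = p^k * a / b with integers a, b, p not dividing b.\<close>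
definition qcong :: "nat \<Rightarrow> nat \<Rightarrow> rat \<Rightarrow> rat \<Rightarrow> bool" where
  "qcong p k x y \<longleftrightarrow>
     (\<exists>a b :: int. \<not> int p dvd b \<and> x - y = of_int (int p ^ k * a) / of_int b)"

end

theory Submission
  imports Defs "HOL-Number_Theory.Cong"
begin

definition pint :: "nat \<Rightarrow> rat \<Rightarrow> bool" where
  "pint p x \<longleftrightarrow> (\<exists>a b :: int. \<not> int p dvd b \<and> x = of_int a / of_int b)"

lemma pint_of_int[simp]: "prime p \<Longrightarrow> pint p (of_int a)"
  unfolding pint_def by (rule exI[of _ a], rule exI[of _ 1]) (auto simp: prime_gt_1_nat)

lemma pint_of_nat[simp]: "prime p \<Longrightarrow> pint p (of_nat a)"
  using pint_of_int[of p "int a"] by simp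

lemma pint_0[simp]: "prime p \<Longrightarrow> pint p 0" and pint_1[simp]: "prime p \<Longrightarrow> pint p 1"
  using pint_of_int[of p 0] pint_of_int[of p 1] by simp_all

lemma pint_add[intro]: assumes "prime p" "pint p x" "pint p y" shows "pint p (x + y)"
proof -
  obtain a b c d :: int where ab: "\<not> int p dvd b" "x = of_int a / of_int b"
    and cd: "\<not> int p dvd d" "y = of_int c / of_int d" using assms unfolding pint_def by blast
  have pr: "prime (int p)" using assms by simp
  have "\<not> int p dvd b * d" using ab cd pr by (simp add: prime_dvd_mult_iff)
  moreover have "b \<noteq> 0" "d \<noteq> 0" using ab cd by auto
  then have "x + y = of_int (a*d + c*b) / of_int (b*d)" using ab cd by (simp add: field_simps)
  ultimately show ?thesis unfolding pint_def by blast
qed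

lemma pint_mult[intro]: assumes "prime p" "pint p x" "pint p y" shows "pint p (x * y)"
proof -
  obtain a b c d :: int where ab: "\<not> int p dvd b" "x = of_int a / of_int b"
    and cd: "\<not> int p dvd d" "y = of_int c / of_int d" using assms unfolding pint_def by blast
  have pr: "prime (int p)" using assms by simp
  have "\<not> int p dvd b * d" using ab cd pr by (simp add: prime_dvd_mult_iff)
  moreover have "x * y = of_int (a*c) / of_int (b*d)" using ab cd by (simp add: field_simps)
  ultimately show ?thesis unfolding pint_def by blast
qed

lemma pint_uminus[intro]: assumes "pint p x" shows "pint p (- x)"
proof -
  obtain a b :: int where ab: "\<not> int p dvd b" "x = of_int a / of_int b"
    using assms unfolding pint_def by blast
  then have "- x = of_int (- a) / of_int b" by simp
  then show ?thesis using ab unfolding pint_def by blast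
qed

lemma pint_diff[intro]: "prime p \<Longrightarrow> pint p x \<Longrightarrow> pint p y \<Longrightarrow> pint p (x - y)"
  using pint_add[of p x "- y"] pint_uminus[of p y] by simp

lemma pint_inv_int: assumes "\<not> int p dvd u" shows "pint p (1 / of_int u)"
  unfolding pint_def using assms by (rule_tac exI[of _ 1], rule_tac exI[of _ u]) auto

lemma pint_inv_nat: assumes "\<not> p dvd u" shows "pint p (1 / of_nat u)"
  using pint_inv_int[of p "int u"] assms by simp

lemma pint_sum[intro]: "prime p \<Longrightarrow> (\<And>i. i \<in> A \<Longrightarrow> pint p (f i)) \<Longrightarrow> pint p (\<Sum>i\<in>A. f i)"
  by (induct A rule: infinite_finite_induct) auto

lemma pint_prod[intro]: "prime p \<Longrightarrow> (\<And>i. i \<in> A \<Longrightarrow> pint p (f i)) \<Longrightarrow> pint p (\<Prod>i\<in>A. f i)"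
  by (induct A rule: infinite_finite_induct) auto

lemma pint_pow[intro]: "prime p \<Longrightarrow> pint p x \<Longrightarrow> pint p (x ^ k)"
  by (induct k) auto

lemma qcong_iff: "qcong p k x y \<longleftrightarrow> (\<exists>z. pint p z \<and> x - y = of_nat p ^ k * z)"
proof
  assume "qcong p k x y"
  then obtain a b :: int where ab: "\<not> int p dvd b" "x - y = of_int (int p ^ k * a) / of_int b"
    unfolding qcong_def by blast
  then have "x - y = of_nat p ^ k * (of_int a / of_int b)" by simp
  then show "\<exists>z. pint p z \<and> x - y = of_nat p ^ k * z" using ab unfolding pint_def by blast
next
  assume "\<exists>z. pint p z \<and> x - y = of_nat p ^ k * z"
  then obtain a b :: int where ab: "\<not> int p dvd b" "x - y = of_nat p ^ k * (of_int a / of_int b)"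
    unfolding pint_def by blast
  then have "x - y = of_int (int p ^ k * a) / of_int b" by simp
  then show "qcong p k x y" using ab unfolding qcong_def by blast
qed

lemma qcongI: "pint p z \<Longrightarrow> x - y = of_nat p ^ k * z \<Longrightarrow> qcong p k x y"
  using qcong_iff by blast

lemma qcong_refl[simp]: "prime p \<Longrightarrow> qcong p k x x"
  by (rule qcongI[of p 0]) auto

lemma qcong_sym: "prime p \<Longrightarrow> qcong p k x y \<Longrightarrow> qcong p k y x"
  unfolding qcong_iff by (metis minus_diff_eq mult_minus_right pint_uminus)

lemma qcong_trans: assumes "prime p" "qcong p k x y" "qcong p k y z" shows "qcong p k x z"
proof -
  obtain u v where "pint p u" "x - y = of_nat p ^ k * u" "pint p v" "y - z = of_nat p ^ k * v"
    using assms unfolding qcong_iff by blast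
  then show ?thesis using assms(1)
    by (intro qcongI[of p "u + v"]) (auto simp: algebra_simps)
qed

lemma qcong_add: assumes "prime p" "qcong p k a b" "qcong p k c d" shows "qcong p k (a + c) (b + d)"
proof -
  obtain u v where "pint p u" "a - b = of_nat p ^ k * u" "pint p v" "c - d = of_nat p ^ k * v"
    using assms unfolding qcong_iff by blast
  then show ?thesis using assms(1)
    by (intro qcongI[of p "u + v"]) (auto simp: algebra_simps)
qed

lemma qcong_sum: assumes "prime p" "\<And>i. i \<in> A \<Longrightarrow> qcong p k (f i) (g i)"
  shows "qcong p k (\<Sum>i\<in>A. f i) (\<Sum>i\<in>A. g i)"
  using assms(2) by (induct A rule: infinite_finite_induct) (auto intro: qcong_add[OF assms(1)] simp: assms(1))

lemma qcong_cmult: assumes "prime p" "qcong p k a b" "pint p c" shows "qcong p k (c * a) (c * b)"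
proof -
  obtain u where "pint p u" "a - b = of_nat p ^ k * u"
    using assms unfolding qcong_iff by blast
  then show ?thesis using assms
    by (intro qcongI[of p "c * u"]) (auto simp: algebra_simps)
qed

lemma qcong_mult: assumes "prime p" "qcong p k a b" "qcong p k c d" "pint p a" "pint p d"
  shows "qcong p k (a * c) (b * d)"
proof -
  have "qcong p k (a * c) (a * d)" using qcong_cmult[OF assms(1,3,4)] .
  moreover have "qcong p k (d * a) (d * b)" using qcong_cmult[OF assms(1,2,5)] .
  ultimately show ?thesis using assms(1) qcong_trans by (simp add: mult.commute)
qed

lemma qcong_prod: assumes "prime p" "\<And>i. i \<in> A \<Longrightarrow> qcong p k (f i) (g i)"
  "\<And>i. i \<in> A \<Longrightarrow> pint p (f i)" "\<And>i. i \<in> A \<Longrightarrow> pint p (g i)"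
  shows "qcong p k (\<Prod>i\<in>A. f i) (\<Prod>i\<in>A. g i)"
  using assms(2-) 
proof (induct A rule: infinite_finite_induct)
  case (insert x F)
  then show ?case using assms(1)
    by (simp) (rule qcong_mult, auto intro!: pint_prod)
qed (auto simp: assms(1))

lemma qcong_mono: assumes "prime p" "qcong p k a b" "j \<le> k" shows "qcong p j a b"
proof -
  obtain u where "pint p u" "a - b = of_nat p ^ k * u"
    using assms unfolding qcong_iff by blast
  moreover have "(of_nat p ^ k :: rat) = of_nat p ^ j * of_nat p ^ (k - j)"
    using assms(3) by (simp flip: power_add)
  ultimately show ?thesis using assms(1)
    by (intro qcongI[of p "of_nat p ^ (k - j) * u"]) (auto intro!: pint_mult pint_pow)
qed

lemma qcong_zero: "prime p \<Longrightarrow> pint p z \<Longrightarrow> qcong p k (of_nat p ^ k * z) 0"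
  by (rule qcongI[of p z]) auto

lemma qcong_shift: assumes "prime p" "qcong p k a b" shows "qcong p (k + j) (of_nat p ^ j * a) (of_nat p ^ j * b)"
proof -
  obtain u where "pint p u" "a - b = of_nat p ^ k * u"
    using assms unfolding qcong_iff by blast
  then show ?thesis using assms(1)
    by (intro qcongI[of p u]) (auto simp: algebra_simps power_add)
qed

lemma qcong_pint: assumes "prime p" "qcong p k a b" "pint p b" shows "pint p a"
proof -
  obtain u where "pint p u" "a - b = of_nat p ^ k * u"
    using assms unfolding qcong_iff by blast
  then have "a = b + of_nat p ^ k * u" by (simp add: algebra_simps)
  then show ?thesis using assms \<open>pint p u\<close> by (auto intro!: pint_mult pint_pow pint_add)
qed

definition Yset :: "nat \<Rightarrow> nat \<Rightarrow> int \<Rightarrow> (nat \<Rightarrow> nat) set" where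
  "Yset p n t = {y \<in> {0..<n} \<rightarrow>\<^sub>E {0..<p}. int (\<Sum>i<n. y i) = t}"

definition Fz :: "nat \<Rightarrow> nat \<Rightarrow> int \<Rightarrow> nat" where
  "Fz p n t = card (Yset p n t)"

lemma finite_Yset[simp]: "finite (Yset p n t)"
  unfolding Yset_def by (rule finite_subset[of _ "{0..<n} \<rightarrow>\<^sub>E {0..<p}"]) (auto intro: finite_PiE)

lemma Fz_0: "Fz p 0 t = (if t = 0 then 1 else 0)"
proof -
  have "Yset p 0 t = (if t = 0 then {\<lambda>_. undefined} else {})"
    unfolding Yset_def by auto
  then show ?thesis unfolding Fz_def by simp
qed

lemma Fz_Suc: "Fz p (Suc n) t = (\<Sum>a<p. Fz p n (t - int a))"
proof -
  let ?A = "SIGMA a:{..<p}. Yset p n (t - int a)"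
  have bij: "bij_betw (\<lambda>(a,y). y(n:=a)) ?A (Yset p (Suc n) t)"
  proof (rule bij_betw_byWitness[where f'="\<lambda>l. (l n, l(n:=undefined))"])
    show "\<forall>a\<in>?A. (\<lambda>l. (l n, l(n:=undefined))) ((\<lambda>(a,y). y(n:=a)) a) = a"
    proof
      fix z assume z: "z \<in> ?A"
      then obtain a y where zz: "z = (a, y)" "y \<in> Yset p n (t - int a)" by auto
      then have "y n = undefined" unfolding Yset_def by (auto simp: PiE_def extensional_def)
      then show "(\<lambda>l. (l n, l(n:=undefined))) ((\<lambda>(a,y). y(n:=a)) z) = z" using zz by auto
    qed
    show "\<forall>a'\<in>Yset p (Suc n) t. (\<lambda>(a,y). y(n:=a)) ((\<lambda>l. (l n, l(n:=undefined))) a') = a'"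
      by auto
    show "(\<lambda>(a,y). y(n:=a)) ` ?A \<subseteq> Yset p (Suc n) t"
    proof clarify
      fix a y assume a: "a < p" and y: "y \<in> Yset p n (t - int a)"
      have s: "(\<Sum>i<n. (y(n := a)) i) = (\<Sum>i<n. y i)" by (rule sum.cong) auto
      show "y(n:=a) \<in> Yset p (Suc n) t"
        using a y s unfolding Yset_def by (auto simp: PiE_def extensional_def Pi_def)
    qed
    show "(\<lambda>l. (l n, l(n:=undefined))) ` Yset p (Suc n) t \<subseteq> ?A"
    proof clarify
      fix l assume l: "l \<in> Yset p (Suc n) t"
      have s: "(\<Sum>i<n. (l(n := undefined)) i) = (\<Sum>i<n. l i)" by (rule sum.cong) auto
      show "l n \<in> {..<p} \<and> l(n:=undefined) \<in> Yset p n (t - int (l n))"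
        using l s unfolding Yset_def by (auto simp: PiE_def extensional_def Pi_def)
    qed
  qed
  have "Fz p (Suc n) t = card ?A" unfolding Fz_def using bij_betw_same_card[OF bij] by simp
  also have "\<dots> = (\<Sum>a<p. Fz p n (t - int a))" unfolding Fz_def by simp
  finally show ?thesis .
qed

definition B :: "nat \<Rightarrow> int \<Rightarrow> int" where
  "B d s = (if s < 0 then 0 else int ((nat s + d) choose d))"

lemma B_diff: "B (Suc d) s - B (Suc d) (s - 1) = B d s"

proof (cases "s < 0")
  case True then show ?thesis by (simp add: B_def)
next
  case False
  show ?thesis
  proof (cases "s = 0")
    case True then show ?thesis by (simp add: B_def)
  next
    case False
    then obtain s' where s': "s = int (Suc s')" using \<open>\<not> s < 0\<close>
      by (metis int_ops(1) less_linear not_gr0 not0_implies_Suc zero_less_imp_eq_int)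
    have "(Suc s' + Suc d) choose Suc d = ((s' + Suc d) choose Suc d) + ((Suc s' + d) choose d)"
      using binomial_Suc_Suc[of "s' + Suc d" d] by simp
    moreover have "nat s = Suc s'" "nat (s - 1) = s'" "\<not> s < 0" "\<not> s - 1 < 0" using s' by auto
    ultimately show ?thesis unfolding B_def by simp
  qed
qed

lemma B_hockey: "(\<Sum>a<p. B d (s - int a)) = B (Suc d) s - B (Suc d) (s - int p)"
proof -
  have "(\<Sum>a<p. B d (s - int a)) = (\<Sum>a<p. B (Suc d) (s - int a) - B (Suc d) (s - int (Suc a)))"
  proof (rule sum.cong)
    fix a assume "a \<in> {..<p}"
    have "s - int (Suc a) = (s - int a) - 1" by simp
    then show "B d (s - int a) = B (Suc d) (s - int a) - B (Suc d) (s - int (Suc a))"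
      using B_diff[of d "s - int a"] by (metis \<open>s - int (Suc a) = (s - int a) - 1\<close>)
  qed simp
  also have "\<dots> = B (Suc d) (s - int 0) - B (Suc d) (s - int p)"
    by (rule sum_lessThan_telescope'[where f="\<lambda>a. B (Suc d) (s - int a)"])
  finally show ?thesis by simp
qed

lemma pascal_telescope:
  fixes G :: "nat \<Rightarrow> int"
  shows "(\<Sum>k\<le>N. (-1)^k * int (N choose k) * (G k - G (Suc k))) =
         (\<Sum>k\<le>Suc N. (-1)^k * int (Suc N choose k) * G k)"
proof -
  have e1: "(\<Sum>k\<le>Suc N. (-1)^k * int (Suc N choose k) * G k) =
      G 0 + (\<Sum>k\<le>N. (-1)^(Suc k) * int (N choose k) * G (Suc k))
          + (\<Sum>k\<le>N. (-1)^(Suc k) * int (N choose Suc k) * G (Suc k))"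
  proof -
    have h: "\<And>k. (-1)^(Suc k) * int (Suc N choose Suc k) * G (Suc k) =
       (-1)^(Suc k) * int (N choose k) * G (Suc k) + (-1)^(Suc k) * int (N choose Suc k) * G (Suc k)"
      by (simp add: algebra_simps)
    show ?thesis
      by (subst sum.atMost_Suc_shift) (simp only: h sum.distrib, simp)
  qed
  have e2: "G 0 + (\<Sum>k\<le>N. (-1)^(Suc k) * int (N choose Suc k) * G (Suc k))
      = (\<Sum>k\<le>Suc N. (-1)^k * int (N choose k) * G k)"
    unfolding sum.atMost_Suc_shift[of _ N] by simp
  have e3: "(\<Sum>k\<le>Suc N. (-1)^k * int (N choose k) * G k) = (\<Sum>k\<le>N. (-1)^k * int (N choose k) * G k)"
    by simp
  have e4: "(\<Sum>k\<le>N. (-1)^k * int (N choose k) * (G k - G (Suc k))) =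
     (\<Sum>k\<le>N. (-1)^k * int (N choose k) * G k) + (\<Sum>k\<le>N. (-1)^(Suc k) * int (N choose k) * G (Suc k))"
    by (simp add: sum.distrib[symmetric] algebra_simps)
  show ?thesis using e1 e2 e3 e4 by simp
qed

lemma Fz_formula:
  "int (Fz p (Suc d) t) = (\<Sum>k\<le>Suc d. (-1)^k * int (Suc d choose k) * B d (t - int k * int p))"
proof (induction d arbitrary: t)
  case 0
  have "int (Fz p (Suc 0) t) = (\<Sum>a<p. if t - int a = 0 then 1 else 0)"
    using Fz_Suc[of p 0 t] by (auto simp: Fz_0 intro!: sum.cong)
  also have "\<dots> = (if 0 \<le> t \<and> t < int p then 1 else 0)"
  proof (cases "0 \<le> t \<and> t < int p")
    case True
    have "(\<Sum>a<p. if t - int a = 0 then 1 else 0 :: int) = (\<Sum>a<p. if a = nat t then 1 else 0)"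
      by (rule sum.cong) (use True in auto)
    also have "\<dots> = 1" using True by (simp add: sum.delta nat_less_iff)
    finally show ?thesis using True by simp
  next
    case False
    then show ?thesis by (intro trans[OF sum.neutral]) auto
  qed
  also have "\<dots> = (\<Sum>k\<le>Suc 0. (-1)^k * int (Suc 0 choose k) * B 0 (t - int k * int p))"
    by (simp add: B_def)
  finally show ?case .
next
  case (Suc d)
  have "int (Fz p (Suc (Suc d)) t) = (\<Sum>a<p. int (Fz p (Suc d) (t - int a)))"
    by (simp add: Fz_Suc)
  also have "\<dots> = (\<Sum>a<p. \<Sum>k\<le>Suc d. (-1)^k * int (Suc d choose k) * B d ((t - int k * int p) - int a))"
    by (simp add: Suc.IH algebra_simps)
  also have "\<dots> = (\<Sum>k\<le>Suc d. (-1)^k * int (Suc d choose k) * (\<Sum>a<p. B d ((t - int k * int p) - int a)))"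
    by (subst sum.swap) (simp add: sum_distrib_left)
  also have "\<dots> = (\<Sum>k\<le>Suc d. (-1)^k * int (Suc d choose k) *
       (B (Suc d) (t - int k * int p) - B (Suc d) (t - int (Suc k) * int p)))"
  proof (rule sum.cong[OF refl])
    fix k
    have e: "t - int (Suc k) * int p = (t - int k * int p) - int p" by (simp add: algebra_simps)
    show "(-1)^k * int (Suc d choose k) * (\<Sum>a<p. B d ((t - int k * int p) - int a)) =
       (-1)^k * int (Suc d choose k) * (B (Suc d) (t - int k * int p) - B (Suc d) (t - int (Suc k) * int p))"
      unfolding e B_hockey ..
  qed
  also have "\<dots> = (\<Sum>k\<le>Suc (Suc d). (-1)^k * int (Suc (Suc d) choose k) * B (Suc d) (t - int k * int p))"
    by (rule pascal_telescope[where G="\<lambda>k. B (Suc d) (t - int k * int p)"])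
  finally show ?case .
qed

lemma fact_B: assumes "0 \<le> s" shows "fact d * B d s = (\<Prod>u\<in>{1..d}. s + int u)"
proof (induction d)
  case 0 then show ?case using assms by (simp add: B_def)
next
  case (Suc d)
  have b: "Suc d * (Suc (nat s + d) choose Suc d) = Suc (nat s + d) * ((nat s + d) choose d)"
    by (rule Suc_times_binomial)
  have "fact (Suc d) * B (Suc d) s = fact d * (int (Suc d * (Suc (nat s + d) choose Suc d)))"
    using assms by (simp add: B_def algebra_simps)
  also have "\<dots> = fact d * B d s * (s + int (Suc d))"
    using assms unfolding b by (simp add: B_def algebra_simps)
  also have "\<dots> = (\<Prod>u\<in>{1..Suc d}. s + int u)"
    using Suc.IH by simp
  finally show ?case .
qed

definition phi :: "nat \<Rightarrow> nat \<Rightarrow> int" where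
  "phi d j = (\<Prod>u\<in>{1..d}-{j}. int u - int j)"

lemma B_cong:
  assumes "1 \<le> M" "1 \<le> j" "j \<le> d" "d \<le> p"
  shows "[fact d * B d (int M * int p - int j) = int M * int p * phi d j] (mod (int p)^2)"
proof -
  let ?s = "int M * int p - int j"
  have s0: "0 \<le> ?s"
  proof -
    have "p \<le> M * p" using assms(1) by simp
    then have "int p \<le> int M * int p" by (metis of_nat_le_iff of_nat_mult)
    then show ?thesis using assms by linarith
  qed
  have "fact d * B d ?s = (\<Prod>u\<in>{1..d}. ?s + int u)" by (rule fact_B[OF s0])
  also have "\<dots> = (?s + int j) * (\<Prod>u\<in>{1..d}-{j}. ?s + int u)"
    using assms by (subst prod.remove[of _ j]) auto
  also have "\<dots> = int M * int p * (\<Prod>u\<in>{1..d}-{j}. ?s + int u)" by simp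
  finally have e: "fact d * B d ?s = int M * int p * (\<Prod>u\<in>{1..d}-{j}. ?s + int u)" .
  have c: "[(\<Prod>u\<in>{1..d}-{j}. ?s + int u) = phi d j] (mod int p)"
    unfolding phi_def
  proof (rule cong_prod)
    fix u
    have "?s + int u = (int u - int j) + int p * int M" by (simp add: algebra_simps)
    have "?s + int u - (int u - int j) = int p * int M" by (simp add: algebra_simps)
    then show "[?s + int u = int u - int j] (mod int p)"
      unfolding cong_iff_dvd_diff by (metis dvd_triv_left)
  qed
  then obtain e where "(\<Prod>u\<in>{1..d}-{j}. ?s + int u) - phi d j = int p * e"
    by (metis cong_iff_dvd_diff cong_sym dvdE)
  then have "int M * int p * (\<Prod>u\<in>{1..d}-{j}. ?s + int u) - int M * int p * phi d j = (int p)^2 * (int M * e)"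
    by (simp add: algebra_simps power2_eq_square flip: right_diff_distrib)
  then show ?thesis unfolding e
    by (metis cong_iff_dvd_diff dvd_triv_left)
qed

definition tau :: "nat \<Rightarrow> nat \<Rightarrow> int" where
  "tau m k = (if k < m then int m - int k else 0)"

lemma Fz_cong:
  assumes "1 \<le> m" "1 \<le> j" "j \<le> d" "d \<le> p"
  shows "[fact d * int (Fz p (Suc d) (int m * int p - int j)) =
          int p * phi d j * (\<Sum>k\<le>Suc d. (-1)^k * int (Suc d choose k) * tau m k)] (mod (int p)^2)"
proof -
  have "fact d * int (Fz p (Suc d) (int m * int p - int j)) =
     (\<Sum>k\<le>Suc d. (-1)^k * int (Suc d choose k) * (fact d * B d (int m * int p - int j - int k * int p)))"
    by (simp add: Fz_formula sum_distrib_left algebra_simps)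
  also have "[\<dots> = (\<Sum>k\<le>Suc d. (-1)^k * int (Suc d choose k) * (int p * phi d j * tau m k))] (mod (int p)^2)"
  proof (rule cong_sum, rule cong_scalar_left)
    fix k
    show "[fact d * B d (int m * int p - int j - int k * int p) = int p * phi d j * tau m k] (mod (int p)^2)"
    proof (cases "k < m")
      case True
      have e: "int m * int p - int j - int k * int p = int (m - k) * int p - int j"
        using True by (simp add: algebra_simps of_nat_diff)
      have "[fact d * B d (int (m - k) * int p - int j) = int (m - k) * int p * phi d j] (mod (int p)^2)"
        by (rule B_cong) (use True assms in auto)
      then show ?thesis unfolding e using True by (simp add: tau_def of_nat_diff algebra_simps)
    next
      case False
      have "int m * int p - int j - int k * int p < 0"
      proof -
        have "int m * int p \<le> int k * int p" using False by (simp add: mult_right_mono)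
        then show ?thesis using assms by linarith
      qed
      then show ?thesis using False by (simp add: B_def tau_def)
    qed
  qed
  also have "(\<Sum>k\<le>Suc d. (-1)^k * int (Suc d choose k) * (int p * phi d j * tau m k)) =
      int p * phi d j * (\<Sum>k\<le>Suc d. (-1)^k * int (Suc d choose k) * tau m k)"
    by (simp add: sum_distrib_left algebra_simps)
  finally show ?thesis .
qed

lemma alt_sum: assumes "1 \<le> n" shows "(\<Sum>k\<le>m. (-1)^k * int (n choose k)) = (-1)^m * int ((n-1) choose m)"
proof (induction m)
  case 0 then show ?case by simp
next
  case (Suc m)
  obtain n' where n: "n = Suc n'" using assms by (cases n) auto
  have "(\<Sum>k\<le>Suc m. (-1)^k * int (n choose k)) = (-1)^m * int (n' choose m) + (-1)^(Suc m) * int (Suc n' choose Suc m)"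
    using Suc.IH n by simp
  also have "\<dots> = (-1)^(Suc m) * int (n' choose Suc m)" by (simp add: algebra_simps)
  finally show ?case using n by simp
qed

lemma H_sum: assumes "2 \<le> n"
  shows "(\<Sum>k<Suc m. (-1)^k * int (n choose k) * (int (Suc m) - int k)) = (-1)^m * int ((n-2) choose m)"
proof (induction m)
  case 0 then show ?case by simp
next
  case (Suc m)
  obtain n' where "n = Suc (Suc n')" using assms by (metis add_2_eq_Suc le_Suc_ex)
  then have n: "n - 1 = Suc n'" "n - 2 = n'" by auto
  have "(\<Sum>k<Suc (Suc m). (-1)^k * int (n choose k) * (int (Suc (Suc m)) - int k)) =
        (\<Sum>k<Suc m. (-1)^k * int (n choose k) * (int (Suc (Suc m)) - int k)) + (-1)^(Suc m) * int (n choose Suc m)"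
    by simp
  also have "(\<Sum>k<Suc m. (-1)^k * int (n choose k) * (int (Suc (Suc m)) - int k)) =
      (\<Sum>k<Suc m. (-1)^k * int (n choose k) * (int (Suc m) - int k)) + (\<Sum>k<Suc m. (-1)^k * int (n choose k))"
    by (simp add: sum.distrib[symmetric] algebra_simps)
  also have "(\<Sum>k<Suc m. (-1)^k * int (n choose k)) + (-1)^(Suc m) * int (n choose Suc m) = (\<Sum>k\<le>Suc m. (-1)^k * int (n choose k))"
    by (simp add: lessThan_Suc_atMost)
  moreover have "\<dots> = (-1)^(Suc m) * int ((n-1) choose Suc m)" by (rule alt_sum) (use assms in simp)
  ultimately show ?case using Suc.IH n by (simp add: algebra_simps)
qed

lemma tau_sum: assumes "2 \<le> n" "1 \<le> m"
  shows "(\<Sum>k\<le>n. (-1)^k * int (n choose k) * tau m k) = (-1)^(m-1) * int ((n-2) choose (m-1))"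
proof -
  obtain m' where m: "m = Suc m'" using assms by (cases m) auto
  have "(\<Sum>k\<le>n. (-1)^k * int (n choose k) * tau m k) = (\<Sum>k\<le>n+m. (-1)^k * int (n choose k) * tau m k)"
    by (rule sum.mono_neutral_left) auto
  also have "\<dots> = (\<Sum>k<m. (-1)^k * int (n choose k) * tau m k)"
    by (rule sum.mono_neutral_right) (auto simp: tau_def)
  also have "\<dots> = (\<Sum>k<Suc m'. (-1)^k * int (n choose k) * (int (Suc m') - int k))"
    unfolding m by (rule sum.cong) (auto simp: tau_def)
  also have "\<dots> = (-1)^m' * int ((n-2) choose m')" by (rule H_sum[OF assms(1)])
  finally show ?thesis using m by simp
qed

lemma prod_lower: "(\<Prod>u\<in>{1..<j}. int u - int j) = (-1)^(j-1) * fact (j-1)"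
proof -
  have "(\<Prod>u\<in>{1..<j}. int u - int j) = (\<Prod>v\<in>{1..<j}. - int v)"
    by (rule prod.reindex_bij_witness[where i="\<lambda>v. j - v" and j="\<lambda>u. j - u"]) auto
  also have "\<dots> = (-1)^(j-1) * (\<Prod>v\<in>{1..<j}. int v)" by (simp add: prod_uminus)
  also have "(\<Prod>v\<in>{1..<j}. int v) = fact (j-1)"
  proof -
    have "{1..<j} = {1..j-1}" by auto
    then show ?thesis by (simp add: fact_prod)
  qed
  finally show ?thesis .
qed

lemma prod_upper: "j \<le> d \<Longrightarrow> (\<Prod>u\<in>{j<..d}. int u - int j) = fact (d - j)"
proof -
  assume jd: "j \<le> d"
  have "(\<Prod>u\<in>{j<..d}. int u - int j) = (\<Prod>v\<in>{1..d-j}. int v)"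
    by (rule prod.reindex_bij_witness[where i="\<lambda>v. v + j" and j="\<lambda>u. u - j"]) (use jd in auto)
  then show ?thesis by (simp add: fact_prod)
qed

lemma phi_gamma: assumes "1 \<le> j" "j \<le> d"
  shows "(-1)^(j-1) * int ((d-1) choose (j-1)) * phi d j = fact (d-1)"
proof -
  have split: "{1..d}-{j} = {1..<j} \<union> {j<..d}" using assms by auto
  have "phi d j = (\<Prod>u\<in>{1..<j}. int u - int j) * (\<Prod>u\<in>{j<..d}. int u - int j)"
    unfolding phi_def split by (rule prod.union_disjoint) auto
  also have "\<dots> = (-1)^(j-1) * fact (j-1) * fact (d-j)" using prod_lower prod_upper assms by simp
  finally have e: "phi d j = (-1)^(j-1) * fact (j-1) * fact (d-j)" .
  have h: "(d-1)-(j-1) = d - j" using assms by simp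
  have g: "fact (j-1) * fact (d-j) * ((d-1) choose (j-1)) = (fact (d-1) :: nat)"
    using binomial_fact_lemma[of "j-1" "d-1"] h assms by simp
  have f: "fact (j-1) * fact (d-j) * int ((d-1) choose (j-1)) = fact (d-1)"
    using arg_cong[OF g, of int] by simp
  have "(-1)^(j-1) * int ((d-1) choose (j-1)) * phi d j = ((-1)^(j-1) * (-1)^(j-1)) * (fact (j-1) * fact (d-j) * int ((d-1) choose (j-1)))"
    unfolding e by (simp only: ac_simps)
  also have "\<dots> = fact (d-1)"
  proof -
    have "(-1::int)^(j-1) * (-1)^(j-1) = 1" by (simp flip: power_add)
    then show ?thesis using f by simp
  qed
  finally show ?thesis .
qed

lemma inv_id:
  fixes X E Y :: rat
  assumes "X \<noteq> 0" "X + E*Y \<noteq> 0"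
  shows "1/(X+E*Y) - (1/X)*(1 - E*Y/X) = E^2 * (Y^2 * (1/(X^2*(X+E*Y))))"
  using assms by (simp add: field_simps power2_eq_square)

lemma inv_expand:
  assumes p: "prime p" and k: "1 \<le> k" and x: "\<not> p dvd x"
  shows "qcong p (2*k) (1 / of_nat (x + p^k*y)) ((1 / of_nat x) * (1 - of_nat p^k * of_nat y / of_nat x))"
proof -
  have x0: "x \<noteq> 0" using x by (metis dvd_0_right)
  have "p dvd p^k" using k by (simp add: dvd_power)
  then have nd: "\<not> p dvd (x + p^k*y)" using x by (metis dvd_add_left_iff dvd_mult2)
  have L0: "x + p^k*y \<noteq> 0" using x0 by simp
  have nd2: "\<not> p dvd (x^2 * (x + p^k*y))" using nd x p by (simp add: prime_dvd_mult_iff prime_dvd_power_iff)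
  define z :: rat where "z = of_nat (y^2) * (1 / of_nat (x^2 * (x + p^k*y)))"
  have pz: "pint p z" unfolding z_def using p nd2 by (intro pint_mult pint_of_nat pint_inv_nat) auto
  have "1 / of_nat (x + p^k*y) - (1 / of_nat x) * (1 - of_nat p^k * of_nat y / of_nat x) = of_nat p ^ (2*k) * (z::rat)"
  proof -
    have L0': "of_nat x + of_nat p ^ k * of_nat y \<noteq> (0::rat)" using L0 by (metis of_nat_0_eq_iff of_nat_add of_nat_mult of_nat_power)
    have "(of_nat p ^ (2*k) :: rat) = (of_nat p ^ k)^2" by (simp add: power_mult mult.commute)
    then show ?thesis unfolding z_def using inv_id[of "of_nat x" "of_nat p ^ k" "of_nat y"] x0 L0' by simp
  qed
  then show ?thesis using pz by (rule qcongI[rotated])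
qed

lemma prod_expand:
  assumes p: "prime p" and a: "\<And>i. i \<in> I \<Longrightarrow> pint p (a i)"
  shows "qcong p (2*k) (\<Prod>i\<in>I. 1 - of_nat p^k * a i) (1 - of_nat p^k * (\<Sum>i\<in>I. a i))"
  using a
proof (induct I rule: infinite_finite_induct)
  case (insert i F)
  let ?e = "of_nat p ^ k :: rat"
  have h: "qcong p (2*k) ((1 - ?e * a i) * (\<Prod>i\<in>F. 1 - ?e * a i)) ((1 - ?e * a i) * (1 - ?e * (\<Sum>i\<in>F. a i)))"
    using insert p by (intro qcong_cmult) (auto intro!: pint_diff pint_mult pint_pow)
  have "(1 - ?e * a i) * (1 - ?e * (\<Sum>i\<in>F. a i)) - (1 - ?e * (a i + (\<Sum>i\<in>F. a i))) = of_nat p ^ (2*k) * (a i * (\<Sum>i\<in>F. a i))"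
    by (simp add: algebra_simps power_mult_distrib flip: power_add mult_2)
  moreover have "pint p (a i * (\<Sum>i\<in>F. a i))" using insert p by (intro pint_mult pint_sum) auto
  ultimately have "qcong p (2*k) ((1 - ?e * a i) * (1 - ?e * (\<Sum>i\<in>F. a i))) (1 - ?e * (a i + (\<Sum>i\<in>F. a i)))"
    by (intro qcongI) 
  with h have "qcong p (2*k) ((1 - ?e * a i) * (\<Prod>i\<in>F. 1 - ?e * a i)) (1 - ?e * (a i + (\<Sum>i\<in>F. a i)))"
    using qcong_trans p by blast
  then show ?case using insert by simp
qed (auto simp: p)

definition sw :: "nat \<Rightarrow> nat \<Rightarrow> nat" where
  "sw i z = (if z = i then 0 else if z = 0 then i else z)"

lemma sw_sw[simp]: "sw i (sw i z) = z" unfolding sw_def by auto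

lemma sw_0[simp]: "sw i 0 = i" unfolding sw_def by auto

lemma sw_mem: "i < n \<Longrightarrow> z < n \<Longrightarrow> sw i z < n" unfolding sw_def by auto

lemma sw_out: "i < n \<Longrightarrow> \<not> z < n \<Longrightarrow> sw i z = z" unfolding sw_def by auto

lemma Yset_sw: assumes i: "i < n" and y: "y \<in> Yset p n t" shows "y \<circ> sw i \<in> Yset p n t"
proof -
  have pie: "y \<in> {0..<n} \<rightarrow>\<^sub>E {0..<p}" and ty: "int (\<Sum>z<n. y z) = t" using y unfolding Yset_def by auto
  have s: "(\<Sum>z<n. y (sw i z)) = (\<Sum>z<n. y z)"
    by (rule sum.reindex_bij_witness[where i="sw i" and j="sw i"]) (simp_all add: sw_mem[OF i])
  have "y \<circ> sw i \<in> {0..<n} \<rightarrow>\<^sub>E {0..<p}"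
  proof (rule PiE_I)
    fix z assume "z \<in> {0..<n}"
    then have "sw i z \<in> {0..<n}" using sw_mem[OF i] by simp
    then show "(y \<circ> sw i) z \<in> {0..<p}" using PiE_mem[OF pie] by simp
  next
    fix z assume z: "z \<notin> {0..<n}"
    then have "sw i z = z" using sw_out[OF i] by simp
    then show "(y \<circ> sw i) z = undefined" using PiE_arb[OF pie z] by simp
  qed
  moreover have "int (\<Sum>z<n. (y \<circ> sw i) z) = t" using s ty by simp
  ultimately show ?thesis unfolding Yset_def by blast
qed

lemma Yset_sum_coord: assumes i: "i < n" shows "(\<Sum>y\<in>Yset p n t. y i) = (\<Sum>y\<in>Yset p n t. y 0)"
proof (rule sum.reindex_bij_witness[where i="\<lambda>y. y \<circ> sw i" and j="\<lambda>y. y \<circ> sw i"])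
  fix y assume y: "y \<in> Yset p n t"
  show "y \<circ> sw i \<in> Yset p n t" by (rule Yset_sw[OF i y])
  show "y \<circ> sw i \<circ> sw i = y" by (simp add: fun_eq_iff)
  show "(y \<circ> sw i) 0 = y i" by simp
next
  fix y assume y: "y \<in> Yset p n t"
  show "y \<circ> sw i \<in> Yset p n t" by (rule Yset_sw[OF i y])
  show "y \<circ> sw i \<circ> sw i = y" by (simp add: fun_eq_iff)
qed

lemma Yset_coord_dvd:
  assumes p: "prime p" and pn: "n < p" and i: "i < n" and c: "p dvd card (Yset p n t)"
  shows "p dvd (\<Sum>y\<in>Yset p n t. y i)"
proof -
  let ?Y = "Yset p n t"
  have "n * (\<Sum>y\<in>?Y. y 0) = (\<Sum>i<n. \<Sum>y\<in>?Y. y 0)" by simp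
  also have "\<dots> = (\<Sum>i<n. \<Sum>y\<in>?Y. y i)"
  proof (rule sum.cong[OF refl])
    fix i assume "i \<in> {..<n}"
    then show "(\<Sum>y\<in>?Y. y 0) = (\<Sum>y\<in>?Y. y i)" using Yset_sum_coord[of i n p t] by simp
  qed
  also have "\<dots> = (\<Sum>y\<in>?Y. \<Sum>i<n. y i)" by (rule sum.swap)
  also have "\<dots> = (\<Sum>y\<in>?Y. nat t)"
  proof (rule sum.cong[OF refl])
    fix y assume "y \<in> ?Y"
    then have "int (\<Sum>i<n. y i) = t" unfolding Yset_def by blast
    then show "(\<Sum>i<n. y i) = nat t" by (metis nat_int)
  qed
  also have "\<dots> = card ?Y * nat t" by simp
  finally have "n * (\<Sum>y\<in>?Y. y 0) = card ?Y * nat t" .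
  then have "p dvd n * (\<Sum>y\<in>?Y. y 0)" using c by simp
  moreover have "\<not> p dvd n" using pn i by (auto dest: dvd_imp_le)
  ultimately have "p dvd (\<Sum>y\<in>?Y. y 0)" using p by (simp add: prime_dvd_mult_iff)
  then show ?thesis unfolding Yset_sum_coord[OF i] .
qed

lemma prod_one_div: "(\<Prod>i\<in>A. 1 / f i :: rat) = 1 / (\<Prod>i\<in>A. f i)"
  by (induct A rule: infinite_finite_induct) auto

lemma per_x:
  assumes p: "prime p" and k: "1 \<le> k" and pn: "n < p"
    and x: "x \<in> S_tuples p n j k" and c: "p dvd card (Yset p n t)"
  shows "qcong p (k+1) (\<Sum>y\<in>Yset p n t. 1 / (\<Prod>i<n. of_nat (x i + p^k * y i)))
           (of_nat (card (Yset p n t)) * (1 / (\<Prod>i<n. of_nat (x i))))"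
proof -
  let ?Y = "Yset p n t"
  let ?e = "of_nat p ^ k :: rat"
  let ?w = "1 / (\<Prod>i<n. of_nat (x i)) :: rat"
  have xu: "\<And>i. i < n \<Longrightarrow> \<not> p dvd x i" using x unfolding S_tuples_def by (auto simp: PiE_def Pi_def)
  have pw: "pint p ?w"
    unfolding prod_one_div[symmetric] using p xu by (intro pint_prod pint_inv_nat) auto
  define a where "a y i = of_nat (y i) * (1 / of_nat (x i) :: rat)" for y i
  have pa: "\<And>y i. i < n \<Longrightarrow> pint p (a y i)" unfolding a_def using p xu by (intro pint_mult pint_of_nat pint_inv_nat) auto
  have step: "qcong p (k+1) (1 / (\<Prod>i<n. of_nat (x i + p^k * y i))) (?w * (1 - ?e * (\<Sum>i<n. a y i)))" for y
  proof -
    have "qcong p (2*k) (\<Prod>i<n. 1 / of_nat (x i + p^k * y i)) (\<Prod>i<n. (1 / of_nat (x i)) * (1 - of_nat p^k * of_nat (y i) / of_nat (x i)))"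
    proof (rule qcong_prod[OF p])
      fix i assume i: "i \<in> {..<n}"
      show "qcong p (2*k) (1 / of_nat (x i + p^k * y i)) ((1 / of_nat (x i)) * (1 - of_nat p^k * of_nat (y i) / of_nat (x i)))"
        using inv_expand[OF p k xu] i by simp
      have "p dvd p^k" using k by (simp add: dvd_power)
      then have "\<not> p dvd (x i + p^k * y i)" using xu i by (metis lessThan_iff dvd_add_left_iff dvd_mult2)
      then show "pint p (1 / of_nat (x i + p^k * y i))" by (rule pint_inv_nat)
      have "(1 / of_nat (x i)) * (1 - of_nat p^k * of_nat (y i) / of_nat (x i)) = (1 / of_nat (x i)) * (1 - ?e * a y i)"
        unfolding a_def by simp
      moreover have "pint p (1 / of_nat (x i))" using xu[of i] i by (intro pint_inv_nat) auto
      moreover have "pint p (1 - ?e * a y i)"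
        using p pa[of i y] i by (intro pint_diff pint_mult pint_pow pint_1 pint_of_nat) auto
      ultimately show "pint p ((1 / of_nat (x i)) * (1 - of_nat p^k * of_nat (y i) / of_nat (x i)))"
        using p by (metis pint_mult)
    qed
    also have "(\<Prod>i<n. (1 / of_nat (x i)) * (1 - of_nat p^k * of_nat (y i) / of_nat (x i))) = ?w * (\<Prod>i<n. 1 - ?e * a y i)"
    proof -
      have Beq: "\<And>i. of_nat p^k * of_nat (y i) / of_nat (x i) = ?e * a y i" unfolding a_def by simp
      show ?thesis unfolding Beq prod.distrib prod_one_div ..
    qed
    finally have h1': "qcong p (2*k) (\<Prod>i<n. 1 / of_nat (x i + p^k * y i)) (?w * (\<Prod>i<n. 1 - ?e * a y i))" .
    have h1: "qcong p (2*k) (1 / (\<Prod>i<n. of_nat (x i + p^k * y i))) (?w * (\<Prod>i<n. 1 - ?e * a y i))"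
      using h1' by (simp only: prod_one_div)
    have h2: "qcong p (2*k) (?w * (\<Prod>i<n. 1 - ?e * a y i)) (?w * (1 - ?e * (\<Sum>i<n. a y i)))"
      by (rule qcong_cmult[OF p prod_expand[OF p] pw]) (use pa in auto)
    have "qcong p (2*k) (1 / (\<Prod>i<n. of_nat (x i + p^k * y i))) (?w * (1 - ?e * (\<Sum>i<n. a y i)))"
      using qcong_trans[OF p h1 h2] .
    then show ?thesis by (rule qcong_mono[OF p]) (use k in simp)
  qed
  have s1: "qcong p (k+1) (\<Sum>y\<in>?Y. 1 / (\<Prod>i<n. of_nat (x i + p^k * y i))) (\<Sum>y\<in>?Y. ?w * (1 - ?e * (\<Sum>i<n. a y i)))"
    by (rule qcong_sum[OF p step])
  have dv: "\<And>i. i < n \<Longrightarrow> p dvd (\<Sum>y\<in>?Y. y i)" using Yset_coord_dvd[OF p pn _ c] by blast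
  define cc where "cc i = (\<Sum>y\<in>?Y. y i) div p" for i
  have cc: "\<And>i. i < n \<Longrightarrow> (\<Sum>y\<in>?Y. y i) = p * cc i" unfolding cc_def using dv by simp
  have "(\<Sum>y\<in>?Y. ?w * (1 - ?e * (\<Sum>i<n. a y i))) = ?w * of_nat (card ?Y) - ?e * ?w * (\<Sum>i<n. \<Sum>y\<in>?Y. a y i)"
  proof -
    have "(\<Sum>y\<in>?Y. ?w * (1 - ?e * (\<Sum>i<n. a y i))) = (\<Sum>y\<in>?Y. ?w - (?e * ?w) * (\<Sum>i<n. a y i))"
      by (rule sum.cong) (simp_all add: algebra_simps)
    also have "\<dots> = (\<Sum>y\<in>?Y. ?w) - (?e * ?w) * (\<Sum>y\<in>?Y. \<Sum>i<n. a y i)"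
      by (simp only: sum_subtractf sum_distrib_left)
    also have "(\<Sum>y\<in>?Y. \<Sum>i<n. a y i) = (\<Sum>i<n. \<Sum>y\<in>?Y. a y i)" by (rule sum.swap)
    finally show ?thesis by (simp add: mult.commute)
  qed
  also have "(\<Sum>i<n. \<Sum>y\<in>?Y. a y i) = (\<Sum>i<n. of_nat p * (of_nat (cc i) * (1 / of_nat (x i))))"
  proof (rule sum.cong[OF refl])
    fix i assume "i \<in> {..<n}"
    then have "(\<Sum>y\<in>?Y. of_nat (y i) :: rat) = of_nat p * of_nat (cc i)"
      using cc by (metis lessThan_iff of_nat_mult of_nat_sum)
    then show "(\<Sum>y\<in>?Y. a y i) = of_nat p * (of_nat (cc i) * (1 / of_nat (x i)))"
      by (simp only: a_def sum_distrib_right[symmetric])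
  qed
  also have "(\<Sum>i<n. of_nat p * (of_nat (cc i) * (1 / of_nat (x i)))) = of_nat p * (\<Sum>i<n. of_nat (cc i) * (1 / of_nat (x i)) :: rat)"
    by (simp only: sum_distrib_left)
  finally have e0: "(\<Sum>y\<in>?Y. ?w * (1 - ?e * (\<Sum>i<n. a y i))) = ?w * of_nat (card ?Y) - ?e * ?w * (of_nat p * (\<Sum>i<n. of_nat (cc i) * (1 / of_nat (x i))))" .
  have e: "(\<Sum>y\<in>?Y. ?w * (1 - ?e * (\<Sum>i<n. a y i))) - of_nat (card ?Y) * ?w =
      of_nat p ^ (k+1) * (- (?w * (\<Sum>i<n. of_nat (cc i) * (1 / of_nat (x i)))))"
  proof -
    define T where "T = (\<Sum>i<n. of_nat (cc i) * (1 / of_nat (x i)) :: rat)"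
    define W where "W = ?w"
    define C where "C = (of_nat (card ?Y) :: rat)"
    define P where "P = (of_nat p :: rat)"
    have "W * C - P^k * W * (P * T) - C * W = P^(k+1) * (- (W * T))"
      by (simp add: algebra_simps)
    then show ?thesis using e0 unfolding T_def W_def C_def P_def by simp
  qed
  have "pint p (- (?w * (\<Sum>i<n. of_nat (cc i) * (1 / of_nat (x i)))))"
    using p pw xu by (intro pint_uminus pint_mult pint_sum pint_of_nat pint_inv_nat) auto
  then have "qcong p (k+1) (\<Sum>y\<in>?Y. ?w * (1 - ?e * (\<Sum>i<n. a y i))) (of_nat (card ?Y) * ?w)"
    using e by (rule qcongI)
  then show ?thesis by (rule qcong_trans[OF p s1])
qed

lemma sum_restrict: "(\<Sum>i<(n::nat). restrict f {0..<n} i) = (\<Sum>i<n. f i)"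
  by (rule sum.cong) auto

lemma prod_restrict: "(\<Prod>i<(n::nat). g (restrict f {0..<n} i)) = (\<Prod>i<n. g (f i))"
  by (rule prod.cong) auto

lemma fwd_mem:
  assumes p: "prime p" and k: "1 \<le> k" and m: "1 \<le> m" and pn: "n < p"
    and j: "j \<in> {1..<n}" and x: "x \<in> S_tuples p n j k" and y: "y \<in> Yset p n (int m * int p - int j)"
  shows "restrict (\<lambda>i. x i + p^k * y i) {0..<n} \<in> S_tuples p n m (k+1)"
proof -
  let ?e = "p^k"
  have pe: "p dvd ?e" using k by (simp add: dvd_power)
  have e0: "0 < ?e" using p prime_gt_0_nat by simp
  have xi: "\<And>i. i < n \<Longrightarrow> 0 < x i \<and> x i < ?e \<and> \<not> p dvd x i"
    using x unfolding S_tuples_def by (auto simp: PiE_def Pi_def)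
  have yi: "\<And>i. i < n \<Longrightarrow> y i < p" using y unfolding Yset_def by (auto simp: PiE_def Pi_def)
  have sx: "(\<Sum>i<n. x i) = j * ?e" using x unfolding S_tuples_def by auto
  have sy: "int (\<Sum>i<n. y i) = int m * int p - int j" using y unfolding Yset_def by auto
  have jle: "j \<le> m * p" using j pn m by (metis atLeastLessThan_iff le_trans less_imp_le_nat mult_le_mono1 nat_mult_1)
  have "int (m * p - j) = int m * int p - int j" using jle by (simp add: of_nat_diff)
  then have sy': "(\<Sum>i<n. y i) = m * p - j" using sy by (metis of_nat_eq_iff)
  have mem: "\<forall>i\<in>{0..<n}. x i + ?e * y i \<in> {v. 0 < v \<and> v < p ^ (k+1) \<and> \<not> p dvd v}"
  proof
    fix i assume "i \<in> {0..<n}"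
    then have i: "i < n" by simp
    have "x i + ?e * y i < ?e + ?e * y i" using xi[OF i] by simp
    also have "\<dots> = ?e * (y i + 1)" by (simp add: algebra_simps)
    also have "\<dots> \<le> ?e * p" using yi[OF i] by (intro mult_left_mono) auto
    also have "\<dots> = p ^ (k+1)" by (simp add: algebra_simps)
    finally have lt: "x i + ?e * y i < p ^ (k+1)" .
    have "\<not> p dvd x i + ?e * y i" using xi[OF i] pe by (metis dvd_add_left_iff dvd_mult2)
    then show "x i + ?e * y i \<in> {v. 0 < v \<and> v < p ^ (k+1) \<and> \<not> p dvd v}" using lt xi[OF i] by simp
  qed
  have "(\<Sum>i<n. x i + ?e * y i) = j * ?e + ?e * (m * p - j)"
    by (simp add: sum.distrib sum_distrib_left[symmetric] sx sy')
  also have "\<dots> = m * p ^ (k+1)" using jle by (simp add: algebra_simps diff_mult_distrib2)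
  finally have s: "(\<Sum>i<n. x i + ?e * y i) = m * p ^ (k+1)" .
  show ?thesis unfolding S_tuples_def using mem s by (simp add: restrict_PiE_iff sum_restrict)
qed

lemma bwd_mem:
  assumes p: "prime p" and k: "1 \<le> k" and n: "1 \<le> n"
    and l: "l \<in> S_tuples p n m (k+1)"
  defines "j \<equiv> (\<Sum>i<n. l i mod p^k) div p^k"
  shows "j \<in> {1..<n} \<and> restrict (\<lambda>i. l i mod p^k) {0..<n} \<in> S_tuples p n j k
     \<and> restrict (\<lambda>i. l i div p^k) {0..<n} \<in> Yset p n (int m * int p - int j)"
proof -
  let ?e = "p^k"
  have pe: "p dvd ?e" using k by (simp add: dvd_power)
  have e0: "0 < ?e" using p prime_gt_0_nat by simp
  have li: "\<And>i. i < n \<Longrightarrow> 0 < l i \<and> l i < p^(k+1) \<and> \<not> p dvd l i"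
    using l unfolding S_tuples_def by (auto simp: PiE_def Pi_def)
  have sl: "(\<Sum>i<n. l i) = m * p^(k+1)" using l unfolding S_tuples_def by auto
  have xi: "0 < l i mod ?e \<and> l i mod ?e < ?e \<and> \<not> p dvd (l i mod ?e)" if i: "i < n" for i
  proof -
    have dm: "l i = l i mod ?e + ?e * (l i div ?e)" by simp
    have nd: "\<not> p dvd (l i mod ?e)"
    proof
      assume "p dvd l i mod ?e"
      then have "p dvd l i" using dvd_mod_iff[OF pe] by blast
      then show False using li[OF i] by simp
    qed
    then have "l i mod ?e \<noteq> 0" by (metis dvd_0_right)
    then show ?thesis using nd e0 by simp
  qed
  have yi: "l i div ?e < p" if i: "i < n" for i
  proof -
    have "l i < ?e * p" using li[OF i] by (simp add: algebra_simps)
    then show ?thesis using e0 by (simp add: div_less_iff_less_mult mult.commute)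
  qed
  define X where "X = (\<Sum>i<n. l i mod ?e)"
  define Yv where "Yv = (\<Sum>i<n. l i div ?e)"
  have A: "X + ?e * Yv = (\<Sum>i<n. l i mod ?e + ?e * (l i div ?e))"
    unfolding X_def Yv_def by (simp only: sum.distrib sum_distrib_left)
  have B: "(\<Sum>i<n. l i mod ?e + ?e * (l i div ?e)) = (\<Sum>i<n. l i)" by (rule sum.cong) simp_all
  have XY: "X + ?e * Yv = m * p * ?e" using A B sl by (simp add: algebra_simps)
  have "?e dvd X + ?e * Yv" unfolding XY by simp
  then have eX: "?e dvd X" by (simp add: dvd_add_left_iff)
  have Xj: "X = j * ?e" unfolding j_def X_def[symmetric] using eX by simp
  have Xpos: "0 < X" unfolding X_def
  proof -
    have "l 0 mod ?e \<le> (\<Sum>i<n. l i mod ?e)" by (rule member_le_sum) (use n in auto)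
    moreover have "0 < l 0 mod ?e" using xi[of 0] n by simp
    ultimately show "0 < (\<Sum>i<n. l i mod ?e)" by linarith
  qed
  have Xlt: "X < n * ?e" unfolding X_def
  proof -
    have "(\<Sum>i<n. l i mod ?e) < (\<Sum>i<n. ?e)" by (rule sum_strict_mono) (use n xi in \<open>auto simp: lessThan_empty_iff\<close>)
    then show "(\<Sum>i<n. l i mod ?e) < n * ?e" by simp
  qed
  have j1: "1 \<le> j" using Xpos Xj by (cases j) auto
  have jn: "j < n" using Xlt Xj e0 by simp
  have "j * ?e + ?e * Yv = m * p * ?e" using XY Xj by simp
  then have "(j + Yv) * ?e = (m * p) * ?e" by (simp add: algebra_simps)
  then have jY: "j + Yv = m * p" using e0 by (metis mult_right_cancel not_less0)
  have Yint: "int Yv = int m * int p - int j" using jY by (metis add_diff_cancel_left' of_nat_add of_nat_mult)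
  have m1: "restrict (\<lambda>i. l i mod ?e) {0..<n} \<in> S_tuples p n j k"
    unfolding S_tuples_def using xi Xj unfolding X_def by (simp add: restrict_PiE_iff sum_restrict)
  have m2: "restrict (\<lambda>i. l i div ?e) {0..<n} \<in> Yset p n (int m * int p - int j)"
    unfolding Yset_def using yi Yint unfolding Yv_def by (simp add: restrict_PiE_iff sum_restrict)
  show ?thesis using m1 m2 j1 jn by simp
qed

lemma finite_S_tuples[simp]: "finite (S_tuples p n m r)"
  unfolding S_tuples_def
proof (rule finite_subset)
  show "finite ({0..<n} \<rightarrow>\<^sub>E {0..<p^r})" by (rule finite_PiE) auto
qed (auto simp: PiE_def Pi_def)

lemma decomp:
  assumes p: "prime p" and k: "1 \<le> k" and n: "1 \<le> n" and pn: "n < p" and m: "1 \<le> m"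
  shows "S p n m (k+1) = (\<Sum>j\<in>{1..<n}. \<Sum>x\<in>S_tuples p n j k. \<Sum>y\<in>Yset p n (int m * int p - int j).
            1 / (\<Prod>i<n. of_nat (x i + p^k * y i)))"
proof -
  let ?e = "p^k"
  have e0: "0 < ?e" using p prime_gt_0_nat by simp
  let ?D = "SIGMA j:{1..<n}. S_tuples p n j k \<times> Yset p n (int m * int p - int j)"
  let ?g = "\<lambda>(j, x, y). restrict (\<lambda>i. x i + ?e * y i) {0..<n}"
  let ?h = "\<lambda>l. ((\<Sum>i<n. l i mod ?e) div ?e, restrict (\<lambda>i. l i mod ?e) {0..<n}, restrict (\<lambda>i. l i div ?e) {0..<n})"
  have bij: "bij_betw ?g ?D (S_tuples p n m (k+1))"
  proof (rule bij_betw_byWitness[where f'="?h"])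
    show "\<forall>z\<in>?D. ?h (?g z) = z"
    proof
      fix z assume "z \<in> ?D"
      then obtain j x y where z: "z = (j,x,y)" and j: "j \<in> {1..<n}" and x: "x \<in> S_tuples p n j k"
        and y: "y \<in> Yset p n (int m * int p - int j)" by auto
      have xP: "x \<in> {0..<n} \<rightarrow>\<^sub>E {v. 0 < v \<and> v < p ^ k \<and> \<not> p dvd v}" and sx: "(\<Sum>i<n. x i) = j * ?e"
        using x unfolding S_tuples_def by auto
      have yP: "y \<in> {0..<n} \<rightarrow>\<^sub>E {0..<p}" using y unfolding Yset_def by auto
      have xi: "\<And>i. i < n \<Longrightarrow> x i < ?e" using xP by (auto simp: PiE_def Pi_def)
      have md0: "x i mod ?e = x i" if "i < n" for i using xi[OF that] by simp
      have dv0: "x i div ?e = 0" if "i < n" for i using xi[OF that] by simp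
      have md: "(x i + ?e * y i) mod ?e = x i" if "i < n" for i using md0[OF that] by simp
      have dv: "(x i + ?e * y i) div ?e = y i" if "i < n" for i using dv0[OF that] e0 by simp
      have c1: "restrict (\<lambda>i. restrict (\<lambda>i. x i + ?e * y i) {0..<n} i mod ?e) {0..<n} = x"
      proof -
        have "restrict (\<lambda>i. restrict (\<lambda>i. x i + ?e * y i) {0..<n} i mod ?e) {0..<n} = restrict x {0..<n}"
          by (rule restrict_ext) (simp add: md0)
        then show ?thesis using xP by simp
      qed
      have c2: "restrict (\<lambda>i. restrict (\<lambda>i. x i + ?e * y i) {0..<n} i div ?e) {0..<n} = y"
      proof -
        have "restrict (\<lambda>i. restrict (\<lambda>i. x i + ?e * y i) {0..<n} i div ?e) {0..<n} = restrict y {0..<n}"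
          by (rule restrict_ext) (metis atLeastLessThan_iff dv restrict_apply')
        then show ?thesis using yP by simp
      qed
      have "(\<Sum>i<n. restrict (\<lambda>i. x i + ?e * y i) {0..<n} i mod ?e) = (\<Sum>i<n. x i)"
        by (rule sum.cong) (simp_all add: md0)
      then have c0: "(\<Sum>i<n. restrict (\<lambda>i. x i + ?e * y i) {0..<n} i mod ?e) div ?e = j"
        using sx e0 by simp
      show "?h (?g z) = z" unfolding z using c0 c1 c2 by simp
    qed
    show "\<forall>l\<in>S_tuples p n m (k+1). ?g (?h l) = l"
    proof
      fix l assume l: "l \<in> S_tuples p n m (k+1)"
      have lP: "l \<in> {0..<n} \<rightarrow>\<^sub>E {v. 0 < v \<and> v < p ^ (k+1) \<and> \<not> p dvd v}" using l unfolding S_tuples_def by auto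
      have "restrict (\<lambda>i. restrict (\<lambda>i. l i mod ?e) {0..<n} i + ?e * restrict (\<lambda>i. l i div ?e) {0..<n} i) {0..<n}
           = restrict l {0..<n}"
        by (rule restrict_ext) simp
      then show "?g (?h l) = l" using lP by simp
    qed
    show "?g ` ?D \<subseteq> S_tuples p n m (k+1)"
      using fwd_mem[OF p k m pn] by auto
    show "?h ` S_tuples p n m (k+1) \<subseteq> ?D"
      using bwd_mem[OF p k n] by auto
  qed
  have "S p n m (k+1) = (\<Sum>l\<in>S_tuples p n m (k+1). 1 / (\<Prod>i<n. of_nat (l i)))" by (simp add: S_def)
  also have "\<dots> = (\<Sum>z\<in>?D. 1 / (\<Prod>i<n. of_nat (?g z i)))"
    by (rule sum.reindex_bij_betw[OF bij, symmetric])
  also have "\<dots> = (\<Sum>z\<in>?D. (\<lambda>(j, x, y). 1 / (\<Prod>i<n. of_nat (x i + ?e * y i))) z)"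
    by (rule sum.cong[OF refl]) (auto simp: prod_restrict[where g="\<lambda>v. of_nat v :: rat"])
  also have "\<dots> = (\<Sum>j\<in>{1..<n}. \<Sum>xy\<in>S_tuples p n j k \<times> Yset p n (int m * int p - int j).
        (\<lambda>(x, y). 1 / (\<Prod>i<n. of_nat (x i + ?e * y i))) xy)"
    by (subst sum.Sigma[symmetric]) (auto simp: split_def)
  also have "\<dots> = (\<Sum>j\<in>{1..<n}. \<Sum>x\<in>S_tuples p n j k. \<Sum>y\<in>Yset p n (int m * int p - int j).
            1 / (\<Prod>i<n. of_nat (x i + ?e * y i)))"
    by (rule sum.cong[OF refl]) (simp add: sum.cartesian_product)
  finally show ?thesis .
qed

lemma key:
  assumes p: "prime p" and k: "1 \<le> k" and n: "1 \<le> n" and pn: "n < p" and m: "1 \<le> m"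
    and dv: "\<And>j. j \<in> {1..<n} \<Longrightarrow> p dvd Fz p n (int m * int p - int j)"
  shows "qcong p (k+1) (S p n m (k+1)) (\<Sum>j\<in>{1..<n}. of_nat (Fz p n (int m * int p - int j)) * S p n j k)"
  unfolding decomp[OF p k n pn m]
proof (rule qcong_sum[OF p])
  fix j assume j: "j \<in> {1..<n}"
  let ?Y = "Yset p n (int m * int p - int j)"
  have "qcong p (k+1) (\<Sum>x\<in>S_tuples p n j k. \<Sum>y\<in>?Y. 1 / (\<Prod>i<n. of_nat (x i + p^k * y i)))
        (\<Sum>x\<in>S_tuples p n j k. of_nat (card ?Y) * (1 / (\<Prod>i<n. of_nat (x i))))"
    by (rule qcong_sum[OF p], rule per_x[OF p k pn]) (use dv[OF j] in \<open>auto simp: Fz_def\<close>)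
  also have "(\<Sum>x\<in>S_tuples p n j k. of_nat (card ?Y) * (1 / (\<Prod>i<n. of_nat (x i)))) = of_nat (Fz p n (int m * int p - int j)) * S p n j k"
    by (simp add: S_def Fz_def sum_distrib_left)
  finally show "qcong p (k+1) (\<Sum>x\<in>S_tuples p n j k. \<Sum>y\<in>?Y. 1 / (\<Prod>i<n. of_nat (x i + p^k * y i)))
      (of_nat (Fz p n (int m * int p - int j)) * S p n j k)" .
qed

definition gam :: "nat \<Rightarrow> nat \<Rightarrow> int" where
  "gam n m = (-1)^(m-1) * int ((n-2) choose (m-1))"

lemma not_dvd_fact:
  assumes p: "prime p" and d: "d < p" shows "\<not> int p dvd fact d"
proof -
  have "\<not> p dvd fact d" using prime_dvd_fact_iff[OF p] d by simp
  then show ?thesis by (metis int_dvd_int_iff of_nat_fact)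
qed

lemma cancel_fact:
  assumes p: "prime p" and d: "d < p" and h: "int p dvd fact d * x" shows "int p dvd x"
proof -
  have pr: "prime (int p)" using p by simp
  show ?thesis using h not_dvd_fact[OF p d] pr by (simp add: prime_dvd_mult_iff)
qed

lemma Ffact:
  assumes p: "prime p" and n: "2 \<le> n" and pn: "n < p" and m: "1 \<le> m" and j: "j \<in> {1..<n}"
  shows "int (Fz p n (int m * int p - int j)) = int p * (int (Fz p n (int m * int p - int j)) div int p)
     \<and> [fact (n-1) * (int (Fz p n (int m * int p - int j)) div int p) = phi (n-1) j * gam n m] (mod int p)"
proof -
  define d where "d = n - 1"
  have nd: "n = Suc d" using n unfolding d_def by simp
  let ?F = "int (Fz p n (int m * int p - int j))"
  have c: "[fact d * ?F = int p * phi d j * (\<Sum>k\<le>Suc d. (-1)^k * int (Suc d choose k) * tau m k)] (mod (int p)^2)"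
    unfolding nd by (rule Fz_cong) (use m j nd pn in auto)
  have ts: "(\<Sum>k\<le>Suc d. (-1)^k * int (Suc d choose k) * tau m k) = gam n m"
    unfolding gam_def nd[symmetric] by (rule tau_sum) (use n m in auto)
  have c2: "(int p)^2 dvd fact d * ?F - int p * (phi d j * gam n m)"
    using c unfolding ts cong_iff_dvd_diff by (simp add: mult.assoc)
  then have "int p dvd fact d * ?F - int p * (phi d j * gam n m)"
    by (rule dvd_trans[rotated]) (simp add: power2_eq_square)
  then have "int p dvd fact d * ?F" by (metis dvd_diff_commute dvd_triv_left dvd_add_right_iff diff_add_cancel)
  moreover have "d < p" using pn nd by simp
  ultimately have "int p dvd ?F" using cancel_fact[OF p] by blast
  then obtain f where f: "?F = int p * f" by (elim dvdE)
  have fd: "?F div int p = f" using f p prime_gt_0_nat by simp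
  have "int p * int p dvd int p * (fact d * f - phi d j * gam n m)"
    using c2 f by (simp add: power2_eq_square algebra_simps)
  then have "int p dvd (fact d * f - phi d j * gam n m)" using p prime_gt_0_nat
    by (subst (asm) dvd_mult_cancel_left) auto
  then show ?thesis using f fd unfolding d_def cong_iff_dvd_diff by simp
qed

lemma pint_S: assumes p: "prime p" shows "pint p (S p n m r)"
  unfolding S_def
proof (rule pint_sum[OF p])
  fix l assume "l \<in> S_tuples p n m r"
  then have "\<And>i. i < n \<Longrightarrow> \<not> p dvd l i" unfolding S_tuples_def by (auto simp: PiE_def Pi_def)
  then show "pint p (1 / (\<Prod>i<n. of_nat (l i)))"
    unfolding prod_one_div[symmetric] using p by (intro pint_prod pint_inv_nat) auto
qed

lemma gam1[simp]: "gam n 1 = 1" by (simp add: gam_def)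

definition ff :: "nat \<Rightarrow> nat \<Rightarrow> nat \<Rightarrow> nat \<Rightarrow> int" where
  "ff p n m j = int (Fz p n (int m * int p - int j)) div int p"

lemma ff_props:
  assumes p: "prime p" and n: "2 \<le> n" and pn: "n < p" and m: "1 \<le> m" and j: "j \<in> {1..<n}"
  shows "(of_nat (Fz p n (int m * int p - int j)) :: rat) = of_nat p * of_int (ff p n m j)"
    and "int p dvd fact (n-1) * ff p n m j - phi (n-1) j * gam n m"
    and "p dvd Fz p n (int m * int p - int j)"
proof -
  note F = Ffact[OF p n pn m j]
  have e: "int (Fz p n (int m * int p - int j)) = int p * ff p n m j" using F unfolding ff_def by simp
  then have "(of_int (int (Fz p n (int m * int p - int j))) :: rat) = of_int (int p * ff p n m j)" by simp
  then show "(of_nat (Fz p n (int m * int p - int j)) :: rat) = of_nat p * of_int (ff p n m j)" by simp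
  show "int p dvd fact (n-1) * ff p n m j - phi (n-1) j * gam n m"
    using F unfolding ff_def cong_iff_dvd_diff by simp
  have "int p dvd int (Fz p n (int m * int p - int j))" using e by simp
  then show "p dvd Fz p n (int m * int p - int j)" by simp
qed

lemma key2:
  assumes p: "prime p" and k: "1 \<le> k" and n: "2 \<le> n" and pn: "n < p" and m: "1 \<le> m"
  shows "qcong p (k+1) (S p n m (k+1)) (\<Sum>j\<in>{1..<n}. of_nat p * of_int (ff p n m j) * S p n j k)"
proof -
  have "qcong p (k+1) (S p n m (k+1)) (\<Sum>j\<in>{1..<n}. of_nat (Fz p n (int m * int p - int j)) * S p n j k)"
    by (rule key[OF p k _ pn m]) (use n ff_props(3)[OF p n pn m] in auto)
  also have "(\<Sum>j\<in>{1..<n}. of_nat (Fz p n (int m * int p - int j)) * S p n j k) = (\<Sum>j\<in>{1..<n}. of_nat p * of_int (ff p n m j) * S p n j k)"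
    by (rule sum.cong[OF refl]) (simp add: ff_props(1)[OF p n pn m])
  finally show ?thesis .
qed

lemma ff_rel:
  assumes p: "prime p" and n: "2 \<le> n" and pn: "n < p" and m: "1 \<le> m" and j: "j \<in> {1..<n}"
  shows "int p dvd ff p n m j - gam n m * ff p n 1 j"
proof -
  let ?d = "n - 1"
  have A: "int p dvd fact ?d * ff p n m j - phi ?d j * gam n m" by (rule ff_props(2)[OF p n pn m j])
  have m1: "1 \<le> (1::nat)" by simp
  have B: "int p dvd fact ?d * ff p n 1 j - phi ?d j" using ff_props(2)[OF p n pn m1 j] by (simp add: gam_def)
  have "fact ?d * (ff p n m j - gam n m * ff p n 1 j) = (fact ?d * ff p n m j - phi ?d j * gam n m) - gam n m * (fact ?d * ff p n 1 j - phi ?d j)"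
    by (simp add: algebra_simps)
  then have "int p dvd fact ?d * (ff p n m j - gam n m * ff p n 1 j)" using A B by (metis dvd_diff dvd_mult)
  then show ?thesis by (rule cancel_fact[OF p, rotated]) (use pn in simp)
qed

lemma ff_sum:
  assumes p: "prime p" and n: "2 \<le> n" and pn: "n < p" and m: "1 \<le> m"
  shows "int p dvd (\<Sum>j\<in>{1..<n}. ff p n m j * gam n j) - gam n m"
proof -
  let ?d = "n - 1"
  have eq: "fact ?d * ((\<Sum>j\<in>{1..<n}. ff p n m j * gam n j) - gam n m) =
     (\<Sum>j\<in>{1..<n}. (fact ?d * ff p n m j - phi ?d j * gam n m) * gam n j)
     + gam n m * ((\<Sum>j\<in>{1..<n}. phi ?d j * gam n j) - fact ?d)"
    by (simp add: algebra_simps sum_distrib_left sum_distrib_right sum_subtractf)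
  have pg: "phi ?d j * gam n j = fact (?d - 1)" if "j \<in> {1..<n}" for j
  proof -
    have "(-1)^(j-1) * int ((?d-1) choose (j-1)) * phi ?d j = fact (?d-1)"
      by (rule phi_gamma) (use that in auto)
    moreover have "n - 2 = ?d - 1" by simp
    ultimately show ?thesis unfolding gam_def by (simp add: algebra_simps)
  qed
  have "(\<Sum>j\<in>{1..<n}. phi ?d j * gam n j) = (\<Sum>j\<in>{1..<n}. fact (?d - 1))"
    by (rule sum.cong[OF refl]) (rule pg)
  also have "\<dots> = of_nat ?d * fact (?d - 1)" by simp
  also have "\<dots> = fact ?d"
  proof -
    obtain d' where nd: "n = Suc (Suc d')" using n by (metis add_2_eq_Suc le_Suc_ex)
    show ?thesis unfolding nd by simp
  qed
  finally have z: "(\<Sum>j\<in>{1..<n}. phi ?d j * gam n j) - fact ?d = 0" by simp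
  have "int p dvd (\<Sum>j\<in>{1..<n}. (fact ?d * ff p n m j - phi ?d j * gam n m) * gam n j)"
    by (rule dvd_sum) (use ff_props(2)[OF p n pn m] in auto)
  then have "int p dvd fact ?d * ((\<Sum>j\<in>{1..<n}. ff p n m j * gam n j) - gam n m)"
    unfolding eq z by simp
  then show ?thesis by (rule cancel_fact[OF p, rotated]) (use pn in simp)
qed

lemma qcong_pmul:
  assumes p: "prime p" and h: "qcong p k a b" and c: "pint p c"
  shows "qcong p (k+1) (of_nat p * c * a) (of_nat p * c * b)"
proof -
  obtain u where "pint p u" "a - b = of_nat p ^ k * u" using h unfolding qcong_iff by blast
  then show ?thesis using p c
    by (intro qcongI[of p "c * u"]) (auto simp: algebra_simps)
qed

lemma base:
  assumes p: "prime p" and n: "2 \<le> n" and pn: "n < p"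
  shows "qcong p 1 (S p n 1 2) 0"
    and "1 \<le> m \<Longrightarrow> qcong p 2 (S p n m 2) (of_int (gam n m) * S p n 1 2)"
proof -
  have k1: "(1::nat) \<le> 1" by simp
  have K: "qcong p 2 (S p n m' 2) (\<Sum>j\<in>{1..<n}. of_nat p * of_int (ff p n m' j) * S p n j 1)" if "1 \<le> m'" for m'
    using key2[OF p k1 n pn that] by (simp add: numeral_2_eq_2)
  have K1: "qcong p 2 (S p n 1 2) (\<Sum>j\<in>{1..<n}. of_nat p * of_int (ff p n 1 j) * S p n j 1)" using K[of 1] by simp
  have z: "qcong p 1 (\<Sum>j\<in>{1..<n}. of_nat p * of_int (ff p n 1 j) * S p n j 1) 0"
  proof -
    have "(\<Sum>j\<in>{1..<n}. of_nat p * of_int (ff p n 1 j) * S p n j 1) = of_nat p ^ 1 * (\<Sum>j\<in>{1..<n}. of_int (ff p n 1 j) * S p n j 1)"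
      by (simp add: sum_distrib_left mult.assoc)
    moreover have "pint p (\<Sum>j\<in>{1..<n}. of_int (ff p n 1 j) * S p n j 1)"
      using p by (intro pint_sum pint_mult pint_of_int pint_S) auto
    ultimately show ?thesis using qcong_zero[OF p, of _ 1] by (metis power_one_right)
  qed
  show "qcong p 1 (S p n 1 2) 0"
    using qcong_trans[OF p qcong_mono[OF p K1] z] by simp
  assume m: "1 \<le> m"
  have t: "qcong p 2 (of_nat p * of_int (ff p n m j) * S p n j 1) (of_int (gam n m) * (of_nat p * of_int (ff p n 1 j) * S p n j 1))"
    if j: "j \<in> {1..<n}" for j
  proof -
    obtain e where e: "ff p n m j - gam n m * ff p n 1 j = int p * e" using ff_rel[OF p n pn m j] by (elim dvdE)
    have "(of_int (ff p n m j) - of_int (gam n m) * of_int (ff p n 1 j) :: rat) = of_nat p * of_int e"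
      using arg_cong[OF e, of "of_int :: int \<Rightarrow> rat"] by simp
    then have "of_nat p * of_int (ff p n m j) * S p n j 1 - of_int (gam n m) * (of_nat p * of_int (ff p n 1 j) * S p n j 1)
        = of_nat p ^ 2 * (of_int e * S p n j 1)"
      by (simp add: algebra_simps power2_eq_square)
    moreover have "pint p (of_int e * S p n j 1)" using p by (intro pint_mult pint_of_int pint_S) auto
    ultimately show ?thesis by (intro qcongI) 
  qed
  have "qcong p 2 (\<Sum>j\<in>{1..<n}. of_nat p * of_int (ff p n m j) * S p n j 1)
       (\<Sum>j\<in>{1..<n}. of_int (gam n m) * (of_nat p * of_int (ff p n 1 j) * S p n j 1))"
    by (rule qcong_sum[OF p t])
  also have "(\<Sum>j\<in>{1..<n}. of_int (gam n m) * (of_nat p * of_int (ff p n 1 j) * S p n j 1)) =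
       of_int (gam n m) * (\<Sum>j\<in>{1..<n}. of_nat p * of_int (ff p n 1 j) * S p n j 1)"
    by (simp add: sum_distrib_left)
  finally have A: "qcong p 2 (\<Sum>j\<in>{1..<n}. of_nat p * of_int (ff p n m j) * S p n j 1)
       (of_int (gam n m) * (\<Sum>j\<in>{1..<n}. of_nat p * of_int (ff p n 1 j) * S p n j 1))" .
  have B: "qcong p 2 (of_int (gam n m) * (\<Sum>j\<in>{1..<n}. of_nat p * of_int (ff p n 1 j) * S p n j 1)) (of_int (gam n m) * S p n 1 2)"
    using qcong_cmult[OF p qcong_sym[OF p K1]] p by simp
  show "qcong p 2 (S p n m 2) (of_int (gam n m) * S p n 1 2)"
    using qcong_trans[OF p K[OF m] qcong_trans[OF p A B]] .
qed

lemma step: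
  assumes p: "prime p" and n: "2 \<le> n" and pn: "n < p" and R: "2 \<le> R"
    and Q: "S p n 1 2 = of_nat p * Q'" and pQ: "pint p Q'"
    and IH: "\<And>j. j \<in> {1..<n} \<Longrightarrow> qcong p R (S p n j R) (of_int (gam n j) * S p n 1 2 * of_nat p ^ (R-2))"
    and m: "1 \<le> m"
  shows "qcong p (R+1) (S p n m (R+1)) (of_int (gam n m) * S p n 1 2 * of_nat p ^ (R-1))"
proof -
  have R1: "1 \<le> R" using R by simp
  have K: "qcong p (R+1) (S p n m (R+1)) (\<Sum>j\<in>{1..<n}. of_nat p * of_int (ff p n m j) * S p n j R)"
    by (rule key2[OF p R1 n pn m])
  have T: "qcong p (R+1) (\<Sum>j\<in>{1..<n}. of_nat p * of_int (ff p n m j) * S p n j R)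
      (\<Sum>j\<in>{1..<n}. of_nat p * of_int (ff p n m j) * (of_int (gam n j) * S p n 1 2 * of_nat p ^ (R-2)))"
    by (rule qcong_sum[OF p], rule qcong_pmul[OF p IH]) (use p in auto)
  have pw: "(of_nat p :: rat) ^ R = of_nat p * of_nat p * of_nat p ^ (R-2)"
  proof -
    have "R = Suc (Suc (R-2))" using R by simp
    then show ?thesis by (metis mult.assoc power_Suc)
  qed
  have E: "(\<Sum>j\<in>{1..<n}. of_nat p * of_int (ff p n m j) * (of_int (gam n j) * S p n 1 2 * of_nat p ^ (R-2)))
      = of_int (\<Sum>j\<in>{1..<n}. ff p n m j * gam n j) * (Q' * of_nat p ^ R)"
  proof -
    have "(\<Sum>j\<in>{1..<n}. of_nat p * of_int (ff p n m j) * (of_int (gam n j) * S p n 1 2 * of_nat p ^ (R-2)))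
        = (\<Sum>j\<in>{1..<n}. of_int (ff p n m j * gam n j) * (Q' * of_nat p ^ R))"
      by (rule sum.cong[OF refl]) (unfold Q pw, simp add: algebra_simps)
    also have "\<dots> = of_int (\<Sum>j\<in>{1..<n}. ff p n m j * gam n j) * (Q' * of_nat p ^ R)"
      by (simp add: sum_distrib_right)
    finally show ?thesis .
  qed
  obtain e where e: "(\<Sum>j\<in>{1..<n}. ff p n m j * gam n j) - gam n m = int p * e"
    using ff_sum[OF p n pn m] by (elim dvdE)
  have F: "qcong p (R+1) (of_int (\<Sum>j\<in>{1..<n}. ff p n m j * gam n j) * (Q' * of_nat p ^ R))
       (of_int (gam n m) * (Q' * of_nat p ^ R))"
  proof (rule qcongI)
    show "pint p (of_int e * Q')" using p pQ by (intro pint_mult pint_of_int) auto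
    have "(of_int (\<Sum>j\<in>{1..<n}. ff p n m j * gam n j) :: rat) - of_int (gam n m) = of_nat p * of_int e"
      using arg_cong[OF e, of "of_int :: int \<Rightarrow> rat"] by simp
    then show "of_int (\<Sum>j\<in>{1..<n}. ff p n m j * gam n j) * (Q' * of_nat p ^ R) - of_int (gam n m) * (Q' * of_nat p ^ R)
        = of_nat p ^ (R+1) * (of_int e * Q')"
      by (simp add: algebra_simps flip: left_diff_distrib)
  qed
  have G: "of_int (gam n m) * (Q' * of_nat p ^ R) = of_int (gam n m) * S p n 1 2 * of_nat p ^ (R-1)"
  proof -
    have "R = Suc (R-1)" using R by simp
    then have "(of_nat p :: rat) ^ R = of_nat p * of_nat p ^ (R-1)" by (metis power_Suc)
    then show ?thesis unfolding Q by (simp add: algebra_simps)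
  qed
  show ?thesis using qcong_trans[OF p K qcong_trans[OF p T F[folded E]]] unfolding G .
qed

theorem lemma2p2:
  fixes m n r p :: nat
  assumes "0 < m" and "0 < r" and "2 \<le> n"
    and "prime p" and "p > n + 1" and "\<not> p dvd m"
  shows "qcong p (r + 1) (S p n m (r + 1))
           ((-1) ^ (m - 1) * of_nat ((n - 2) choose (m - 1)) * S p n 1 2 * of_nat p ^ (r - 1))"
proof -
  have p: "prime p" and n: "2 \<le> n" and pn: "n < p" using assms by auto
  obtain Q' where Q: "S p n 1 2 - 0 = of_nat p ^ 1 * Q'" and pQ: "pint p Q'"
    using base(1)[OF p n pn] unfolding qcong_iff by blast
  have Q': "S p n 1 2 = of_nat p * Q'" using Q by simp
  have main: "\<forall>m. 1 \<le> m \<longrightarrow> qcong p (r' + 2) (S p n m (r' + 2)) (of_int (gam n m) * S p n 1 2 * of_nat p ^ r')" for r'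
  proof (induction r')
    case 0
    show ?case unfolding add_0 power_0 using base(2)[OF p n pn] by simp
  next
    case (Suc r')
    show ?case
    proof (intro allI impI)
      fix m :: nat assume m: "1 \<le> m"
      have "qcong p (r' + 2 + 1) (S p n m (r' + 2 + 1)) (of_int (gam n m) * S p n 1 2 * of_nat p ^ (r' + 2 - 1))"
        by (rule step[OF p n pn _ Q' pQ _ m]) (use Suc.IH in auto)
      then show "qcong p (Suc r' + 2) (S p n m (Suc r' + 2)) (of_int (gam n m) * S p n 1 2 * of_nat p ^ Suc r')"
        by simp
    qed
  qed
  obtain r' where r: "r = Suc r'" using assms(2) by (cases r) auto
  have "qcong p (r' + 2) (S p n m (r' + 2)) (of_int (gam n m) * S p n 1 2 * of_nat p ^ r')"
    using main assms(1) by simp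
  then show ?thesis unfolding r by (simp add: gam_def)
qed


end
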